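(* Let $A\in\mathbb{R}^{n\times n}$ be a lower Hessenberg invertible M-matrix. Define the Gauss--Seidel splitting $M_{GS}=\operatorname{tril}(A)$, $N_{GS}=M_{GS}-A$, $P_{GS}=M_{GS}^{-1}N_{GS}$; the anti-Gauss--Seidel splitting $M_{AGS}=\operatorname{triu}(A)$, $N_{AGS}=M_{AGS}-A$, $P_{AGS}=M_{AGS}^{-1}N_{AGS}$; and, for $S$ the stair matrix of first order or of second order generated by $A$, the staircase splitting $M_S=S$, $N_S=M_S-A$, $P_S=M_S^{-1}N_S$. Then \[ \rho(P_{GS}) \geq \rho(P_S) \geq \rho(P_{AGS}). \]
   Context: $A$ is lower Hessenberg if $A_{ij}=0$ whenever $j>i+1$. $\operatorname{tril}(A)$ (resp. $\operatorname{triu}(A)$) is the lower (resp. upper) triangular part of $A$ including the diagonal. Let $\operatorname{tridiag}(A)$ be the tridiagonal matrix keeping the subdiagonal, diagonal and superdiagonal entries of $A$ and zeroing the rest. The stair matrix of first order generated by $A$ is obtained from $\operatorname{tridiag}(A)$ by setting the entries $(i,i-1)$ and $(i,i+1)$ (when they exist) to zero for every odd $i$; the stair matrix of second order is obtained from $\operatorname{tridiag}(A)$ by setting the entries $(i,i-1)$ and $(i,i+1)$ (when they exist) to zero for every even $i$. $\rho(\cdot)$ denotes the spectral radius. *)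

theory Defs
  imports "Jordan_Normal_Form.Spectral_Radius" "Jordan_Normal_Form.Gauss_Jordan_Elimination"
begin

definition rho :: "real mat \<Rightarrow> real" where
  "rho A = spectral_radius (map_mat complex_of_real A)"

definition lower_hessenberg :: "real mat \<Rightarrow> bool" where
  "lower_hessenberg A \<longleftrightarrow> (\<forall>i<dim_row A. \<forall>j<dim_col A. j > i + 1 \<longrightarrow> A $$ (i,j) = 0)"

definition nonsingular_M_matrix :: "real mat \<Rightarrow> bool" where
  "nonsingular_M_matrix A \<longleftrightarrow> (\<exists>n s B. A \<in> carrier_mat n n \<and> B \<in> carrier_mat n n \<and>
      (\<forall>i<n. \<forall>j<n. B $$ (i,j) \<ge> 0) \<and> A = s \<cdot>\<^sub>m 1\<^sub>m n - B \<and> rho B < s)"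

definition tril :: "real mat \<Rightarrow> real mat" where
  "tril A = mat (dim_row A) (dim_col A) (\<lambda>(i,j). if j \<le> i then A $$ (i,j) else 0)"

definition triu :: "real mat \<Rightarrow> real mat" where
  "triu A = mat (dim_row A) (dim_col A) (\<lambda>(i,j). if i \<le> j then A $$ (i,j) else 0)"

(* 0-based indices; row i (0-based) is row Suc i in the paper's 1-based numbering *)
definition tridiag :: "real mat \<Rightarrow> real mat" where
  "tridiag A = mat (dim_row A) (dim_col A)
     (\<lambda>(i,j). if i = j \<or> j = i + 1 \<or> i = j + 1 then A $$ (i,j) else 0)"

definition stair1 :: "real mat \<Rightarrow> real mat" where
  "stair1 A = mat (dim_row A) (dim_col A)
     (\<lambda>(i,j). if i \<noteq> j \<and> odd (Suc i) then 0 else tridiag A $$ (i,j))"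

definition stair2 :: "real mat \<Rightarrow> real mat" where
  "stair2 A = mat (dim_row A) (dim_col A)
     (\<lambda>(i,j). if i \<noteq> j \<and> even (Suc i) then 0 else tridiag A $$ (i,j))"

definition iter_mat :: "real mat \<Rightarrow> real mat \<Rightarrow> real mat" where
  "iter_mat M A = the (mat_inverse M) * (M - A)"

end

theory Submission
  imports Defs
begin

definition nonneg_mat :: "real mat \<Rightarrow> bool" where
  "nonneg_mat P \<longleftrightarrow> (\<forall>i<dim_row P. \<forall>j<dim_col P. P $$ (i,j) \<ge> 0)"

lemma mv_sum:
  assumes "M \<in> carrier_mat n m" "x \<in> carrier_vec m" "i < n"
  shows "(M *\<^sub>v x) $ i = (\<Sum>j<m. M $$ (i,j) * x $ j)"
  using assms by (auto simp: scalar_prod_def lessThan_atLeast0 intro!: sum.cong)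

lemma mono_mv:
  assumes P: "P \<in> carrier_mat n n" and nn: "nonneg_mat P"
    and u: "u \<in> carrier_vec n" and w: "w \<in> carrier_vec n"
    and le: "\<And>i. i < n \<Longrightarrow> u $ i \<le> w $ i" and i: "i < n"
  shows "(P *\<^sub>v u) $ i \<le> (P *\<^sub>v w) $ i"
proof -
  have "(\<Sum>j<n. P $$ (i,j) * u $ j) \<le> (\<Sum>j<n. P $$ (i,j) * w $ j)"
    apply (rule sum_mono) using nn P le i unfolding nonneg_mat_def
    by (auto intro!: mult_left_mono)
  thus ?thesis using mv_sum[OF P u i] mv_sum[OF P w i] by simp
qed

lemma nonneg_mult:
  assumes "P \<in> carrier_mat n m" "Q \<in> carrier_mat m k" "nonneg_mat P" "nonneg_mat Q"
  shows "nonneg_mat (P * Q)"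
  using assms unfolding nonneg_mat_def
  by (auto simp: scalar_prod_def intro!: sum_nonneg)

lemma nonneg_pow:
  assumes "P \<in> carrier_mat n n" "nonneg_mat P"
  shows "nonneg_mat (P ^\<^sub>m k)"
proof (induction k)
  case 0
  then show ?case by (auto simp: nonneg_mat_def)
next
  case (Suc k)
  then show ?case using assms nonneg_mult[of "P ^\<^sub>m k" n n P n] by auto
qed

lemma nonneg_mv:
  assumes P: "P \<in> carrier_mat n n" and nn: "nonneg_mat P"
    and u: "u \<in> carrier_vec n" and le: "\<And>i. i < n \<Longrightarrow> 0 \<le> u $ i" and i: "i < n"
  shows "0 \<le> (P *\<^sub>v u) $ i"
  using mono_mv[OF P nn _ u, of "0\<^sub>v n" i] le i P by auto

lemma pow_growth:
  assumes P: "P \<in> carrier_mat n n" and nn: "nonneg_mat P"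
    and y: "y \<in> carrier_vec n" and y0: "\<And>i. i < n \<Longrightarrow> 0 \<le> y $ i"
    and lam: "\<And>i. i < n \<Longrightarrow> lam * y $ i \<le> (P *\<^sub>v y) $ i" and l0: "lam \<ge> 0"
  shows "i < n \<Longrightarrow> lam ^ k * y $ i \<le> (P ^\<^sub>m k *\<^sub>v y) $ i"
proof (induction k arbitrary: i)
  case 0
  then show ?case using y P by simp
next
  case (Suc k)
  have Pk: "P ^\<^sub>m k \<in> carrier_mat n n" using P by simp
  have "lam ^ Suc k * y $ i = lam * (lam ^ k * y $ i)" by simp
  also have "\<dots> \<le> lam * (P ^\<^sub>m k *\<^sub>v y) $ i" using Suc l0 by (simp add: mult_left_mono)
  finally have 1: "lam ^ Suc k * y $ i \<le> lam * (P ^\<^sub>m k *\<^sub>v y) $ i" .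
  have "(P ^\<^sub>m Suc k *\<^sub>v y) $ i = (P ^\<^sub>m k *\<^sub>v (P *\<^sub>v y)) $ i"
    using P Pk y by (simp add: assoc_mult_mat_vec[OF Pk P y])
  also have "\<dots> \<ge> (P ^\<^sub>m k *\<^sub>v (lam \<cdot>\<^sub>v y)) $ i"
    by (rule mono_mv[OF Pk nonneg_pow[OF P nn]]) (use y P lam Suc in auto)
  also have "(P ^\<^sub>m k *\<^sub>v (lam \<cdot>\<^sub>v y)) $ i = lam * (P ^\<^sub>m k *\<^sub>v y) $ i"
    using Pk y Suc P by (simp add: mult_mat_vec)
  finally show ?case using 1 by simp
qed

lemma CW0:
  assumes P: "P \<in> carrier_mat n n" and nn: "nonneg_mat P"
    and sr: "spectral_radius (map_mat complex_of_real P) < 1"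
    and y: "y \<in> carrier_vec n" and y0: "\<And>i. i < n \<Longrightarrow> 0 \<le> y $ i"
    and i0: "i0 < n" "y $ i0 > 0" and l1: "lam > 1"
    and lam: "\<And>i. i < n \<Longrightarrow> lam * y $ i \<le> (P *\<^sub>v y) $ i"
  shows False
proof -
  have Pc: "map_mat complex_of_real P \<in> carrier_mat n n" using P by simp
  from spectral_radius_jnf_norm_bound_less_1_upper_triangular[OF Pc sr] obtain c where
    c: "\<forall>k. norm_bound (map_mat complex_of_real P ^\<^sub>m k) c" by auto
  have bnd: "(P ^\<^sub>m k) $$ (i,j) \<le> c" if "i < n" "j < n" for k i j
  proof -
    have "norm ((map_mat complex_of_real P ^\<^sub>m k) $$ (i,j)) \<le> c"
      using c that P unfolding norm_bound_def by auto
    moreover have "map_mat complex_of_real P ^\<^sub>m k = map_mat complex_of_real (P ^\<^sub>m k)"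
      using of_real_hom.mat_hom_pow[OF P] by metis
    ultimately show ?thesis using that P by simp
  qed
  define Y where "Y = (\<Sum>j<n. y $ j)"
  have main: "lam ^ k * y $ i0 \<le> c * Y" for k
  proof -
    have "lam ^ k * y $ i0 \<le> (P ^\<^sub>m k *\<^sub>v y) $ i0"
      by (rule pow_growth[OF P nn y y0 lam _ i0(1)]) (use l1 in auto)
    also have "\<dots> = (\<Sum>j<n. (P ^\<^sub>m k) $$ (i0,j) * y $ j)"
      by (rule mv_sum) (use P y i0 in auto)
    also have "\<dots> \<le> (\<Sum>j<n. c * y $ j)"
      by (rule sum_mono) (use bnd y0 i0 in \<open>auto intro: mult_right_mono\<close>)
    also have "\<dots> = c * Y" unfolding Y_def by (simp add: sum_distrib_left)
    finally show ?thesis .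
  qed
  obtain k where k: "c * Y / y $ i0 < lam ^ k" using real_arch_pow[OF l1] by blast
  hence "c * Y < lam ^ k * y $ i0" using i0 by (simp add: field_simps)
  with main[of k] show False by simp
qed

lemma spec_scale:
  assumes P: "P \<in> carrier_mat n n" and a: "a > 0" and n: "n > 0"
  shows "spectral_radius (map_mat complex_of_real (a \<cdot>\<^sub>m P)) \<le> a * spectral_radius (map_mat complex_of_real P)"
proof -
  define Pc where "Pc = map_mat complex_of_real P"
  define Q where "Q = map_mat complex_of_real (a \<cdot>\<^sub>m P)"
  have Pc: "Pc \<in> carrier_mat n n" and Q: "Q \<in> carrier_mat n n" using P unfolding Pc_def Q_def by auto
  from spectral_radius_mem_max(1)[OF Q n] obtain e where e: "e \<in> spectrum Q" "spectral_radius Q = norm e" by auto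
  from e(1) obtain v where v: "eigenvector Q v e" unfolding spectrum_def eigenvalue_def by auto
  hence vc: "v \<in> carrier_vec n" "v \<noteq> 0\<^sub>v n" "Q *\<^sub>v v = e \<cdot>\<^sub>v v" using Q unfolding eigenvector_def by auto
  have "Pc *\<^sub>v v = (e / complex_of_real a) \<cdot>\<^sub>v v"
  proof (rule eq_vecI)
    fix i assume i: "i < dim_vec (e / complex_of_real a \<cdot>\<^sub>v v)"
    hence i': "i < n" using vc by simp
    have "(Q *\<^sub>v v) $ i = (\<Sum>j<n. Q $$ (i,j) * v $ j)" by (rule mv_sum) (use Q vc i' in auto)
    also have "\<dots> = complex_of_real a * (\<Sum>j<n. Pc $$ (i,j) * v $ j)"
      using P i' unfolding Q_def Pc_def by (simp add: sum_distrib_left mult.assoc)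
    also have "\<dots> = complex_of_real a * (Pc *\<^sub>v v) $ i" using mv_sum[OF Pc vc(1) i'] by simp
    finally have "(Q *\<^sub>v v) $ i = complex_of_real a * (Pc *\<^sub>v v) $ i" .
    thus "(Pc *\<^sub>v v) $ i = (e / complex_of_real a \<cdot>\<^sub>v v) $ i"
      using vc(3) i' vc(1) a by (simp add: field_simps)
  qed (use Pc vc in auto)
  hence "eigenvector Pc v (e / complex_of_real a)" using vc Pc unfolding eigenvector_def by auto
  hence "e / complex_of_real a \<in> spectrum Pc" unfolding spectrum_def eigenvalue_def by auto
  hence "norm (e / complex_of_real a) \<le> spectral_radius Pc"
    using spectral_radius_mem_max(2)[OF Pc n] by auto
  hence "norm e \<le> a * spectral_radius Pc" using a by (simp add: norm_divide field_simps)
  thus ?thesis using e unfolding Q_def Pc_def by simp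
qed

lemma sr_nonneg:
  assumes "P \<in> carrier_mat n n" "n > 0"
  shows "spectral_radius (map_mat complex_of_real P) \<ge> 0"
  using spectral_radius_mem_max(1)[of "map_mat complex_of_real P" n] assms by auto

lemma CW:
  assumes P: "P \<in> carrier_mat n n" and nn: "nonneg_mat P"
    and y: "y \<in> carrier_vec n" and y0: "\<And>i. i < n \<Longrightarrow> 0 \<le> y $ i"
    and i0: "i0 < n" "y $ i0 > 0" and l0: "lam \<ge> 0"
    and lam: "\<And>i. i < n \<Longrightarrow> lam * y $ i \<le> (P *\<^sub>v y) $ i"
  shows "lam \<le> rho P"
proof (rule ccontr)
  assume "\<not> lam \<le> rho P"
  hence lt: "rho P < lam" by simp
  have n: "n > 0" using i0 by auto
  have r0: "rho P \<ge> 0" using sr_nonneg[OF P n] unfolding rho_def .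
  define nu where "nu = (rho P + lam) / 2"
  have nu: "nu > 0" "rho P < nu" "nu < lam" using lt r0 unfolding nu_def by auto
  define P' where "P' = (1 / nu) \<cdot>\<^sub>m P"
  have P': "P' \<in> carrier_mat n n" using P unfolding P'_def by auto
  have nn': "nonneg_mat P'" using nn nu P unfolding P'_def nonneg_mat_def by auto
  have "spectral_radius (map_mat complex_of_real P') \<le> (1 / nu) * rho P"
    unfolding P'_def rho_def by (rule spec_scale[OF P _ n]) (use nu in auto)
  also have "\<dots> < 1" using nu by (simp add: field_simps)
  finally have sr: "spectral_radius (map_mat complex_of_real P') < 1" .
  show False
  proof (rule CW0[OF P' nn' sr y y0 i0])
    show "1 < lam / nu" using nu by simp
    fix i assume i: "i < n"
    have "(P' *\<^sub>v y) $ i = (1 / nu) * (P *\<^sub>v y) $ i"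
      using P y i unfolding P'_def by (simp add: mv_sum[of _ n n] sum_distrib_left mult.assoc)
    thus "lam / nu * y $ i \<le> (P' *\<^sub>v y) $ i" using lam[OF i] nu
      by (simp add: divide_right_mono)
  qed
qed

definition msk :: "(nat \<Rightarrow> nat \<Rightarrow> bool) \<Rightarrow> nat \<Rightarrow> real mat \<Rightarrow> real mat" where
  "msk K n A = mat n n (\<lambda>(i,j). if K i j then A $$ (i,j) else 0)"

lemma abs_ineq:
  fixes m nn :: "nat \<Rightarrow> real" and v :: "nat \<Rightarrow> complex"
  assumes i: "i < n" and mi: "m i \<ge> 0" and mj: "\<And>j. j < n \<Longrightarrow> j \<noteq> i \<Longrightarrow> m j \<le> 0"
    and nj: "\<And>j. j < n \<Longrightarrow> nn j \<ge> 0"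
    and eq: "(\<Sum>j<n. complex_of_real (nn j) * v j) = e * (\<Sum>j<n. complex_of_real (m j) * v j)"
  shows "cmod e * (\<Sum>j<n. m j * cmod (v j)) \<le> (\<Sum>j<n. nn j * cmod (v j))"
proof -
  define R where "R = {..<n} - {i}"
  have fin: "finite R" unfolding R_def by auto
  have split: "(\<Sum>j<n. f j) = f i + (\<Sum>j\<in>R. f j)" for f :: "nat \<Rightarrow> 'b::comm_monoid_add"
    unfolding R_def using i by (simp add: sum.remove)
  define S1 where "S1 = (\<Sum>j<n. complex_of_real (nn j) * v j)"
  have "e * (complex_of_real (m i) * v i) = S1 - e * (\<Sum>j\<in>R. complex_of_real (m j) * v j)"
    using eq split[of "\<lambda>j. complex_of_real (m j) * v j"] unfolding S1_def by (simp add: algebra_simps)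
  hence "cmod (e * (complex_of_real (m i) * v i)) \<le> cmod S1 + cmod (e * (\<Sum>j\<in>R. complex_of_real (m j) * v j))"
    by (metis norm_triangle_ineq4)
  also have "cmod S1 \<le> (\<Sum>j<n. nn j * cmod (v j))"
    unfolding S1_def apply (rule order.trans[OF norm_sum]) apply (rule sum_mono) using nj by (auto simp: norm_mult)
  also have "cmod (e * (\<Sum>j\<in>R. complex_of_real (m j) * v j)) \<le> cmod e * (\<Sum>j\<in>R. (- m j) * cmod (v j))"
  proof -
    have "cmod (\<Sum>j\<in>R. complex_of_real (m j) * v j) \<le> (\<Sum>j\<in>R. (- m j) * cmod (v j))"
      apply (rule order.trans[OF norm_sum], rule sum_mono)
      using mj unfolding R_def by (auto simp: norm_mult)
    thus ?thesis by (simp add: norm_mult mult_left_mono)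
  qed
  finally have "cmod e * m i * cmod (v i) \<le> (\<Sum>j<n. nn j * cmod (v j)) + cmod e * (\<Sum>j\<in>R. (- m j) * cmod (v j))"
    using mi by (simp add: norm_mult mult.assoc)
  moreover have "(\<Sum>j<n. m j * cmod (v j)) = m i * cmod (v i) - (\<Sum>j\<in>R. (- m j) * cmod (v j))"
    using split[of "\<lambda>j. m j * cmod (v j)"] by (simp add: sum_negf)
  ultimately show ?thesis
    by (smt (verit, ccfv_SIG) mult.assoc right_diff_distrib)
qed

context
  fixes A B :: "real mat" and s :: real and n :: nat
  assumes A: "A \<in> carrier_mat n n" and B: "B \<in> carrier_mat n n"
    and Bnn: "\<And>i j. i < n \<Longrightarrow> j < n \<Longrightarrow> B $$ (i,j) \<ge> 0"
    and AsB: "A = s \<cdot>\<^sub>m 1\<^sub>m n - B" and srB: "rho B < s"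
begin

lemma Aij: "i < n \<Longrightarrow> j < n \<Longrightarrow> A $$ (i,j) = (if i = j then s else 0) - B $$ (i,j)"
  using B unfolding AsB by auto

lemma Aoff: "i < n \<Longrightarrow> j < n \<Longrightarrow> i \<noteq> j \<Longrightarrow> A $$ (i,j) \<le> 0"
  using Aij Bnn by auto

lemma Bnonneg: "nonneg_mat B"
  using B Bnn unfolding nonneg_mat_def by auto

lemma s_pos: "n > 0 \<Longrightarrow> s > 0"
  using sr_nonneg[OF B] srB unfolding rho_def by force

lemma Bdiag: assumes i: "i < n" shows "B $$ (i,i) < s"
proof -
  have "B $$ (i,i) \<le> rho B"
  proof (rule CW[OF B Bnonneg, of "unit_vec n i" i])
    fix k assume k: "k < n"
    have "(B *\<^sub>v unit_vec n i) $ k = (\<Sum>j<n. B $$ (k,j) * unit_vec n i $ j)"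
      by (rule mv_sum) (use B k in auto)
    also have "\<dots> = B $$ (k,i)" using i by (simp add: unit_vec_def if_distrib cong: if_cong)
    finally show "B $$ (i, i) * unit_vec n i $ k \<le> (B *\<^sub>v unit_vec n i) $ k"
      using Bnn[OF k i] i k by auto
  qed (use i Bnn in auto)
  with srB show ?thesis by simp
qed

lemma Adiag: "i < n \<Longrightarrow> A $$ (i,i) > 0"
  using Aij Bdiag by auto

lemma msk_carrier: "msk K n A \<in> carrier_mat n n"
  unfolding msk_def by auto

lemma msk_idx: "i < n \<Longrightarrow> j < n \<Longrightarrow> msk K n A $$ (i,j) = (if K i j then A $$ (i,j) else 0)"
  unfolding msk_def by auto

lemma Zpos:
  assumes Kr: "\<And>i. K i i" and x: "x \<in> carrier_vec n"
    and b: "\<And>i. i < n \<Longrightarrow> (msk K n A *\<^sub>v x) $ i \<ge> 0" and i: "i < n"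
  shows "x $ i \<ge> 0"
proof (rule ccontr)
  assume "\<not> x $ i \<ge> 0"
  hence xi: "x $ i < 0" by simp
  have n: "n > 0" using i by auto
  define u where "u = vec n (\<lambda>k. max (- x $ k) 0)"
  have u: "u \<in> carrier_vec n" unfolding u_def by auto
  have "s \<le> rho B"
  proof (rule CW[OF B Bnonneg u, of i])
    show "\<And>k. k < n \<Longrightarrow> 0 \<le> u $ k" unfolding u_def by auto
    show "0 < u $ i" unfolding u_def using xi i by auto
    show "0 \<le> s" using s_pos[OF n] by simp
    show "i < n" by (rule i)
    fix k assume k: "k < n"
    show "s * u $ k \<le> (B *\<^sub>v u) $ k"
    proof (cases "x $ k \<ge> 0")
      case True
      hence "u $ k = 0" unfolding u_def using k by auto
      thus ?thesis using nonneg_mv[OF B Bnonneg u _ k] \<open>\<And>k. k < n \<Longrightarrow> 0 \<le> u $ k\<close> by auto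
    next
      case False
      define B' where "B' = (\<lambda>j. if K k j then B $$ (k,j) else 0)"
      have "0 \<le> (msk K n A *\<^sub>v x) $ k" using b[OF k] .
      also have "\<dots> = (\<Sum>j<n. msk K n A $$ (k,j) * x $ j)" by (rule mv_sum[OF msk_carrier x k])
      also have "\<dots> = (\<Sum>j<n. (if k = j then s * x $ j else 0) - B' j * x $ j)"
        by (rule sum.cong) (use k Kr in \<open>auto simp: msk_idx Aij B'_def algebra_simps\<close>)
      also have "\<dots> = s * x $ k - (\<Sum>j<n. B' j * x $ j)"
        using k by (simp add: sum_subtractf)
      finally have 1: "s * (- x $ k) \<le> (\<Sum>j<n. B' j * (- x $ j))"
        by (simp add: sum_negf)
      also have "\<dots> \<le> (\<Sum>j<n. B $$ (k,j) * u $ j)"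
      proof (rule sum_mono)
        fix j assume j: "j \<in> {..<n}"
        have u0: "u $ j \<ge> 0" "- x $ j \<le> u $ j" using j by (auto simp: u_def)
        have "B' j \<ge> 0" "B' j \<le> B $$ (k,j)" using Bnn k j by (auto simp: B'_def)
        then show "B' j * (- x $ j) \<le> B $$ (k,j) * u $ j" using u0
          by (meson mult_left_mono mult_right_mono order_trans)
      qed
      also have "\<dots> = (B *\<^sub>v u) $ k" using mv_sum[OF B u k] by simp
      finally show ?thesis using False k unfolding u_def by simp
    qed
  qed
  with srB show False by simp
qed

lemma msk_inv:
  assumes Kr: "\<And>i. K i i"
  obtains Minv where "mat_inverse (msk K n A) = Some Minv" "msk K n A * Minv = 1\<^sub>m n"
    "Minv * msk K n A = 1\<^sub>m n" "Minv \<in> carrier_mat n n" "nonneg_mat Minv"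
proof -
  let ?M = "msk K n A"
  have M: "?M \<in> carrier_mat n n" by (rule msk_carrier)
  have "det ?M \<noteq> 0"
  proof
    assume "det ?M = 0"
    then obtain v where v: "v \<in> carrier_vec n" "v \<noteq> 0\<^sub>v n" "?M *\<^sub>v v = 0\<^sub>v n"
      using det_0_iff_vec_prod_zero_field[OF M] by auto
    have z: "(-1::real) \<cdot>\<^sub>v 0\<^sub>v n = 0\<^sub>v n" by (rule eq_vecI) auto
    have mv: "?M *\<^sub>v ((-1) \<cdot>\<^sub>v v) = 0\<^sub>v n" using mult_mat_vec[OF M v(1), of "-1"] v z by simp
    have "v $ i = 0" if i: "i < n" for i
    proof -
      have "v $ i \<ge> 0" by (rule Zpos[of K, OF Kr v(1) _ i]) (use v in simp)
      moreover have "((-1) \<cdot>\<^sub>v v) $ i \<ge> 0" by (rule Zpos[of K, OF Kr _ _ i]) (use v mv in auto)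
      ultimately show ?thesis using i v by simp
    qed
    hence "v = 0\<^sub>v n" using v by (intro eq_vecI) auto
    with v show False by simp
  qed
  hence "?M \<in> Units (ring_mat TYPE(real) n ())" by (rule det_non_zero_imp_unit[OF M])
  hence "mat_inverse ?M \<noteq> None" using mat_inverse(1)[OF M, of "()"] by auto
  then obtain Minv where mi: "mat_inverse ?M = Some Minv" by auto
  note props = mat_inverse(2)[OF M mi]
  have "nonneg_mat Minv"
    unfolding nonneg_mat_def
  proof (intro allI impI)
    fix i j assume i: "i < dim_row Minv" and j: "j < dim_col Minv"
    hence i': "i < n" and j': "j < n" using props by auto
    have eq: "Minv $$ (i,j) = (Minv *\<^sub>v unit_vec n j) $ i"
      using props i' j' by (simp add: mv_sum[of Minv n n] unit_vec_def if_distrib cong: if_cong)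
    have "?M *\<^sub>v (Minv *\<^sub>v unit_vec n j) = unit_vec n j"
      using props M by (simp add: assoc_mult_mat_vec[symmetric, of _ n n _ n])
    hence "(Minv *\<^sub>v unit_vec n j) $ i \<ge> 0"
      by (intro Zpos[of K, OF Kr _ _ i']) (use props in \<open>auto simp: unit_vec_def\<close>)
    thus "Minv $$ (i,j) \<ge> 0" using eq by simp
  qed
  with that mi props show ?thesis by auto
qed

lemma N_idx: "i < n \<Longrightarrow> j < n \<Longrightarrow> (msk K n A - A) $$ (i,j) = (if K i j then 0 else - A $$ (i,j))"
  using A by (auto simp: msk_idx[symmetric] msk_carrier) (auto simp: msk_idx)

lemma N_carrier: "msk K n A - A \<in> carrier_mat n n"
  using A unfolding carrier_mat_def by (simp add: msk_def)

lemma N_nonneg: assumes Kr: "\<And>i. K i i" shows "nonneg_mat (msk K n A - A)"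
  unfolding nonneg_mat_def
proof (intro allI impI)
  fix i j assume "i < dim_row (msk K n A - A)" "j < dim_col (msk K n A - A)"
  hence ij: "i < n" "j < n" using N_carrier[of K] by auto
  show "(msk K n A - A) $$ (i,j) \<ge> 0"
    using N_idx[OF ij, of K] Aoff[OF ij] Kr by (cases "i = j") auto
qed

lemma iter_eq: "mat_inverse (msk K n A) = Some Minv \<Longrightarrow> iter_mat (msk K n A) A = Minv * (msk K n A - A)"
  unfolding iter_mat_def by simp

lemma eig_abs:
  assumes Kr: "\<And>i. K i i"
    and e: "e \<in> spectrum (map_mat complex_of_real (iter_mat (msk K n A) A))"
  shows "\<exists>y\<in>carrier_vec n. (\<forall>i<n. 0 \<le> y $ i) \<and> (\<exists>i0<n. 0 < y $ i0) \<and>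
     (\<forall>i<n. cmod e * (msk K n A *\<^sub>v y) $ i \<le> ((msk K n A - A) *\<^sub>v y) $ i)"
proof -
  obtain Minv where mi: "mat_inverse (msk K n A) = Some Minv" "msk K n A * Minv = 1\<^sub>m n"
    "Minv * msk K n A = 1\<^sub>m n" "Minv \<in> carrier_mat n n" "nonneg_mat Minv"
    using msk_inv[of K, OF Kr] by blast
  define M where "M = msk K n A"
  define N where "N = msk K n A - A"
  define P where "P = Minv * N"
  have M: "M \<in> carrier_mat n n" and N: "N \<in> carrier_mat n n" unfolding M_def N_def
    using msk_carrier N_carrier by auto
  have P: "P \<in> carrier_mat n n" using mi N unfolding P_def by auto
  have iP: "iter_mat (msk K n A) A = P" using iter_eq[OF mi(1)] unfolding P_def N_def by simp
  define Pc where "Pc = map_mat complex_of_real P"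
  define Mc where "Mc = map_mat complex_of_real M"
  define Nc where "Nc = map_mat complex_of_real N"
  have Pc: "Pc \<in> carrier_mat n n" and Mc: "Mc \<in> carrier_mat n n" unfolding Pc_def Mc_def using P M by auto
  from e obtain v where "eigenvector Pc v e" unfolding spectrum_def eigenvalue_def iP Pc_def by auto
  hence v: "v \<in> carrier_vec n" "v \<noteq> 0\<^sub>v n" "Pc *\<^sub>v v = e \<cdot>\<^sub>v v" using Pc unfolding eigenvector_def by auto
  have MP: "M * P = N" unfolding P_def using mi M N unfolding M_def
    by (simp add: assoc_mult_mat[symmetric, of _ n n _ n _ n])
  have NcMP: "Nc = Mc * Pc" unfolding Nc_def Mc_def Pc_def MP[symmetric]
    by (rule of_real_hom.mat_hom_mult[OF M P])
  have eqv: "Nc *\<^sub>v v = e \<cdot>\<^sub>v (Mc *\<^sub>v v)"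
    unfolding NcMP using Mc Pc v by (simp add: mult_mat_vec[OF Mc v(1)])
  define y where "y = vec n (\<lambda>j. cmod (v $ j))"
  have y: "y \<in> carrier_vec n" unfolding y_def by simp
  have "\<exists>i0<n. v $ i0 \<noteq> 0"
  proof (rule ccontr)
    assume "\<not> ?thesis"
    hence "v = 0\<^sub>v n" using v by (intro eq_vecI) auto
    with v show False by simp
  qed
  then obtain i0 where i0: "i0 < n" "v $ i0 \<noteq> 0" by auto
  have Nnn: "N $$ (i,j) \<ge> 0" if "i < n" "j < n" for i j
    using N_idx[OF that, of K] Aoff[OF that] Kr unfolding N_def by (cases "i = j") auto
  have main: "cmod e * (M *\<^sub>v y) $ i \<le> (N *\<^sub>v y) $ i" if i: "i < n" for i
  proof -
    have "(\<Sum>j<n. complex_of_real (N $$ (i,j)) * v $ j) = e * (\<Sum>j<n. complex_of_real (M $$ (i,j)) * v $ j)"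
    proof -
      have "(Nc *\<^sub>v v) $ i = (\<Sum>j<n. Nc $$ (i,j) * v $ j)" by (rule mv_sum) (use N v i in \<open>auto simp: Nc_def\<close>)
      moreover have "(Mc *\<^sub>v v) $ i = (\<Sum>j<n. Mc $$ (i,j) * v $ j)" by (rule mv_sum[OF Mc v(1) i])
      moreover have "(Nc *\<^sub>v v) $ i = e * (Mc *\<^sub>v v) $ i" using eqv i Mc by simp
      ultimately show ?thesis using i M N unfolding Nc_def Mc_def by simp
    qed
    hence "cmod e * (\<Sum>j<n. M $$ (i,j) * cmod (v $ j)) \<le> (\<Sum>j<n. N $$ (i,j) * cmod (v $ j))"
      by (intro abs_ineq[OF i])
        (use i Adiag Aoff Nnn in \<open>auto simp: M_def msk_idx less_imp_le\<close>)
    moreover have "(M *\<^sub>v y) $ i = (\<Sum>j<n. M $$ (i,j) * cmod (v $ j))"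
      using mv_sum[OF M y i] unfolding y_def by simp
    moreover have "(N *\<^sub>v y) $ i = (\<Sum>j<n. N $$ (i,j) * cmod (v $ j))"
      using mv_sum[OF N y i] unfolding y_def by simp
    ultimately show ?thesis by simp
  qed
  show ?thesis
    by (rule bexI[OF _ y]) (use main i0 in \<open>auto simp: y_def M_def N_def\<close>)
qed

lemma Ay: assumes y: "y \<in> carrier_vec n" and i: "i < n"
  shows "(A *\<^sub>v y) $ i = s * y $ i - (B *\<^sub>v y) $ i"
proof -
  have "(A *\<^sub>v y) $ i = (\<Sum>j<n. ((if i = j then s * y $ j else 0) - B $$ (i,j) * y $ j))"
    unfolding mv_sum[OF A y i]
  proof (rule sum.cong)
    fix j assume "j \<in> {..<n}"
    hence j: "j < n" by simp
    show "A $$ (i, j) * y $ j = (if i = j then s * y $ j else 0) - B $$ (i, j) * y $ j"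
      unfolding Aij[OF i j] by (simp add: left_diff_distrib)
  qed simp
  also have "\<dots> = s * y $ i - (\<Sum>j<n. B $$ (i,j) * y $ j)" using i by (simp add: sum_subtractf)
  finally show ?thesis using mv_sum[OF B y i] by simp
qed

lemma MNA: assumes y: "y \<in> carrier_vec n" and i: "i < n"
  shows "((msk K n A - A) *\<^sub>v y) $ i = (msk K n A *\<^sub>v y) $ i - (A *\<^sub>v y) $ i"
proof -
  have "((msk K n A - A) *\<^sub>v y) $ i = (\<Sum>j<n. msk K n A $$ (i,j) * y $ j - A $$ (i,j) * y $ j)"
    unfolding mv_sum[OF N_carrier y i] by (rule sum.cong) (use i A in \<open>auto simp: algebra_simps msk_carrier\<close>)
  thus ?thesis using mv_sum[OF A y i] mv_sum[OF msk_carrier y i] by (simp add: sum_subtractf)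
qed

lemma iter_carrier_nonneg:
  assumes Kr: "\<And>i. K i i"
  shows "iter_mat (msk K n A) A \<in> carrier_mat n n" "nonneg_mat (iter_mat (msk K n A) A)"
proof -
  obtain Minv where mi: "mat_inverse (msk K n A) = Some Minv" "msk K n A * Minv = 1\<^sub>m n"
    "Minv * msk K n A = 1\<^sub>m n" "Minv \<in> carrier_mat n n" "nonneg_mat Minv"
    using msk_inv[of K, OF Kr] by blast
  show "iter_mat (msk K n A) A \<in> carrier_mat n n" using iter_eq[OF mi(1)] mi N_carrier[of K] by auto
  show "nonneg_mat (iter_mat (msk K n A) A)" unfolding iter_eq[OF mi(1)]
    by (rule nonneg_mult[OF mi(4) N_carrier mi(5) N_nonneg[of K, OF Kr]])
qed

lemma rho_lt1:
  assumes Kr: "\<And>i. K i i" and n: "n > 0"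
  shows "rho (iter_mat (msk K n A) A) < 1"
proof (rule ccontr)
  assume "\<not> ?thesis"
  hence ge: "rho (iter_mat (msk K n A) A) \<ge> 1" by simp
  let ?P = "iter_mat (msk K n A) A"
  have P: "?P \<in> carrier_mat n n" using iter_carrier_nonneg[of K, OF Kr] by auto
  obtain e where e: "e \<in> spectrum (map_mat complex_of_real ?P)" "rho ?P = cmod e"
    using spectral_radius_mem_max(1)[of "map_mat complex_of_real ?P" n] P n unfolding rho_def by auto
  from eig_abs[of K, OF Kr e(1)] obtain y i0 where y: "y \<in> carrier_vec n" "\<And>i. i < n \<Longrightarrow> 0 \<le> y $ i"
     "i0 < n" "0 < y $ i0"
     "\<And>i. i < n \<Longrightarrow> cmod e * (msk K n A *\<^sub>v y) $ i \<le> ((msk K n A - A) *\<^sub>v y) $ i"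
    by blast
  have "s \<le> rho B"
  proof (rule CW[OF B Bnonneg y(1,2,3,4)])
    show "0 \<le> s" using s_pos[OF n] by simp
    fix i assume i: "i < n"
    have Nn: "((msk K n A - A) *\<^sub>v y) $ i \<ge> 0"
      by (rule nonneg_mv[OF N_carrier N_nonneg[of K, OF Kr] y(1) y(2) i])
    have "(A *\<^sub>v y) $ i \<le> 0"
    proof (cases "(msk K n A *\<^sub>v y) $ i \<le> 0")
      case True
      then show ?thesis using MNA[OF y(1) i, of K] Nn by simp
    next
      case False
      hence "(msk K n A *\<^sub>v y) $ i \<le> cmod e * (msk K n A *\<^sub>v y) $ i" using ge e(2)
        by (simp add: mult_le_cancel_right1)
      then show ?thesis using MNA[OF y(1) i, of K] y(5)[OF i] by simp
    qed
    thus "s * y $ i \<le> (B *\<^sub>v y) $ i" using Ay[OF y(1) i] by simp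
  qed
  with srB show False by simp
qed

lemma E_sum:
  assumes z: "z \<in> carrier_vec n" and i: "i < n"
  shows "lam * (msk K n A *\<^sub>v z) $ i - ((msk K n A - A) *\<^sub>v z) $ i
    = (\<Sum>j<n. (lam ^ (if K i j then 1 else 0) * A $$ (i,j)) * z $ j)"
proof -
  have "lam * (msk K n A *\<^sub>v z) $ i - ((msk K n A - A) *\<^sub>v z) $ i
      = lam * (msk K n A *\<^sub>v z) $ i - (msk K n A *\<^sub>v z) $ i + (A *\<^sub>v z) $ i"
    using MNA[OF z i] by simp
  also have "\<dots> = (\<Sum>j<n. (lam * msk K n A $$ (i,j) - msk K n A $$ (i,j) + A $$ (i,j)) * z $ j)"
    unfolding mv_sum[OF msk_carrier z i] mv_sum[OF A z i]
  proof -
    have "lam * (\<Sum>j<n. msk K n A $$ (i, j) * z $ j) - (\<Sum>j<n. msk K n A $$ (i, j) * z $ j) + (\<Sum>j<n. A $$ (i, j) * z $ j)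
      = (\<Sum>j<n. lam * (msk K n A $$ (i, j) * z $ j) - msk K n A $$ (i, j) * z $ j + A $$ (i, j) * z $ j)"
      by (simp add: sum.distrib sum_subtractf sum_distrib_left)
    also have "\<dots> = (\<Sum>j<n. (lam * msk K n A $$ (i,j) - msk K n A $$ (i,j) + A $$ (i,j)) * z $ j)"
      by (rule sum.cong) (simp_all add: algebra_simps)
    finally show "lam * (\<Sum>j<n. msk K n A $$ (i, j) * z $ j) - (\<Sum>j<n. msk K n A $$ (i, j) * z $ j) + (\<Sum>j<n. A $$ (i, j) * z $ j)
      = (\<Sum>j<n. (lam * msk K n A $$ (i,j) - msk K n A $$ (i,j) + A $$ (i,j)) * z $ j)" .
  qed
  also have "\<dots> = (\<Sum>j<n. (lam ^ (if K i j then 1 else 0) * A $$ (i,j)) * z $ j)"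
    by (rule sum.cong) (use i in \<open>auto simp: msk_idx algebra_simps\<close>)
  finally show ?thesis .
qed

lemma spectrum_empty0: assumes "P \<in> carrier_mat 0 0" shows "spectrum (map_mat complex_of_real P) = {}"
proof -
  have "v = 0\<^sub>v 0" if "v \<in> carrier_vec 0" for v :: "complex vec" using that by (intro eq_vecI) auto
  then show ?thesis using assms unfolding spectrum_def eigenvalue_def eigenvector_def by auto
qed

lemma compare:
  assumes KXr: "\<And>i. KX i i" and KYr: "\<And>i. KY i i"
    and hess: "\<And>i j. i < n \<Longrightarrow> j < n \<Longrightarrow> i + 1 < j \<Longrightarrow> A $$ (i,j) = 0"
    and cond: "\<And>i j. i < n \<Longrightarrow> j < n \<Longrightarrow> i \<noteq> j \<Longrightarrow> j \<le> i + 1 \<Longrightarrow>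
        (if KX i j then 1 else 0) + p j \<le> (if KY i j then 1 else 0) + (p i :: nat)"
  shows "rho (iter_mat (msk KY n A) A) \<le> rho (iter_mat (msk KX n A) A)"
proof (cases "n = 0")
  case True
  have "spectrum (map_mat complex_of_real (iter_mat (msk KY n A) A)) = {}"
    "spectrum (map_mat complex_of_real (iter_mat (msk KX n A) A)) = {}"
    using spectrum_empty0 iter_carrier_nonneg[of KY, OF KYr] iter_carrier_nonneg[of KX, OF KXr] True by auto
  thus ?thesis unfolding rho_def spectral_radius_def by simp
next
  case False
  hence n: "n > 0" by simp
  let ?PY = "iter_mat (msk KY n A) A"
  let ?PX = "iter_mat (msk KX n A) A"
  have PY: "?PY \<in> carrier_mat n n" using iter_carrier_nonneg[of KY, OF KYr] by auto
  have PX: "?PX \<in> carrier_mat n n" "nonneg_mat ?PX" using iter_carrier_nonneg[of KX, OF KXr] by auto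
  obtain e where e: "e \<in> spectrum (map_mat complex_of_real ?PY)" "rho ?PY = cmod e"
    using spectral_radius_mem_max(1)[of "map_mat complex_of_real ?PY" n] PY n unfolding rho_def by auto
  define lam where "lam = cmod e"
  have l1: "lam < 1" using rho_lt1[of KY, OF KYr n] e(2) unfolding lam_def by simp
  from eig_abs[of KY, OF KYr e(1)] obtain y i0 where y: "y \<in> carrier_vec n" "\<And>i. i < n \<Longrightarrow> 0 \<le> y $ i"
     "i0 < n" "0 < y $ i0"
     "\<And>i. i < n \<Longrightarrow> lam * (msk KY n A *\<^sub>v y) $ i \<le> ((msk KY n A - A) *\<^sub>v y) $ i"
    unfolding lam_def by blast
  show ?thesis
  proof (cases "lam = 0")
    case True
    then show ?thesis using e(2) sr_nonneg[OF PX(1) n] unfolding lam_def rho_def by simp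
  next
    case False
    hence l0: "lam > 0" unfolding lam_def by simp
    define y' where "y' = vec n (\<lambda>j. lam ^ p j * y $ j)"
    have y': "y' \<in> carrier_vec n" unfolding y'_def by simp
    have y'0: "\<And>i. i < n \<Longrightarrow> 0 \<le> y' $ i" unfolding y'_def using y(2) l0 by simp
    have y'i0: "0 < y' $ i0" unfolding y'_def using y(3,4) l0 by simp
    have key: "lam * (msk KX n A *\<^sub>v y') $ i \<le> ((msk KX n A - A) *\<^sub>v y') $ i" if i: "i < n" for i
    proof -
      have "lam * (msk KX n A *\<^sub>v y') $ i - ((msk KX n A - A) *\<^sub>v y') $ i
         = (\<Sum>j<n. (lam ^ (if KX i j then 1 else 0) * A $$ (i,j)) * y' $ j)" by (rule E_sum[OF y' i])
      also have "\<dots> \<le> (\<Sum>j<n. lam ^ p i * ((lam ^ (if KY i j then 1 else 0) * A $$ (i,j)) * y $ j))"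
      proof (rule sum_mono)
        fix j assume "j \<in> {..<n}"
        hence j: "j < n" by simp
        have "lam ^ (if KX i j then 1 else 0) * A $$ (i,j) * lam ^ p j \<le> lam ^ p i * (lam ^ (if KY i j then 1 else 0) * A $$ (i,j))"
        proof (cases "i = j")
          case True
          then show ?thesis using KXr KYr by (simp add: algebra_simps)
        next
          case ne: False
          show ?thesis
          proof (cases "i + 1 < j")
            case True
            then show ?thesis using hess[OF i j] by simp
          next
            case False
            have c: "(if KX i j then 1 else 0) + p j \<le> (if KY i j then 1 else 0) + p i"
              using cond[OF i j ne] False by simp
            have "lam ^ ((if KY i j then 1 else 0) + p i) \<le> lam ^ ((if KX i j then 1 else 0) + p j)"
              by (rule power_decreasing[OF c]) (use l0 l1 in auto)
            hence "lam ^ (if KX i j then 1 else 0) * lam ^ p j * A $$ (i,j) \<le> lam ^ p i * lam ^ (if KY i j then 1 else 0) * A $$ (i,j)"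
              using Aoff[OF i j ne] by (intro mult_right_mono_neg) (auto simp: power_add algebra_simps)
            then show ?thesis by (simp add: algebra_simps)
          qed
        qed
        thus "lam ^ (if KX i j then 1 else 0) * A $$ (i,j) * y' $ j \<le> lam ^ p i * ((lam ^ (if KY i j then 1 else 0) * A $$ (i,j)) * y $ j)"
          using y(2)[OF j] j unfolding y'_def
          by (simp add: mult.assoc[symmetric] mult_right_mono)
      qed
      also have "\<dots> = lam ^ p i * (lam * (msk KY n A *\<^sub>v y) $ i - ((msk KY n A - A) *\<^sub>v y) $ i)"
        unfolding E_sum[OF y(1) i] by (simp add: sum_distrib_left)
      also have "\<dots> \<le> 0" using y(5)[OF i] l0 by (simp add: mult_nonneg_nonpos)
      finally show ?thesis by simp
    qed
    obtain Minv where mi: "mat_inverse (msk KX n A) = Some Minv" "msk KX n A * Minv = 1\<^sub>m n"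
      "Minv * msk KX n A = 1\<^sub>m n" "Minv \<in> carrier_mat n n" "nonneg_mat Minv"
      using msk_inv[of KX, OF KXr] by blast
    have "lam \<le> rho ?PX"
    proof (rule CW[OF PX y' y'0 y(3) y'i0])
      show "0 \<le> lam" using l0 by simp
      fix i assume i: "i < n"
      have "lam * y' $ i = (Minv *\<^sub>v (lam \<cdot>\<^sub>v (msk KX n A *\<^sub>v y'))) $ i"
      proof -
        have "Minv *\<^sub>v (lam \<cdot>\<^sub>v (msk KX n A *\<^sub>v y')) = lam \<cdot>\<^sub>v ((Minv * msk KX n A) *\<^sub>v y')"
          using mi msk_carrier[of KX] y' by (simp add: mult_mat_vec[OF mi(4)] assoc_mult_mat_vec[OF mi(4) msk_carrier y', symmetric])
        also have "\<dots> = lam \<cdot>\<^sub>v y'" using mi y' by simp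
        finally have "Minv *\<^sub>v (lam \<cdot>\<^sub>v (msk KX n A *\<^sub>v y')) = lam \<cdot>\<^sub>v y'" .
        thus ?thesis using i y' by simp
      qed
      also have "\<dots> \<le> (Minv *\<^sub>v ((msk KX n A - A) *\<^sub>v y')) $ i"
        by (rule mono_mv[OF mi(4,5)]) (use key msk_carrier[of KX] N_carrier[of KX] y' i in auto)
      also have "\<dots> = (?PX *\<^sub>v y') $ i"
        unfolding iter_eq[OF mi(1)] using mi N_carrier[of KX] y' by simp
      finally show "lam * y' $ i \<le> (?PX *\<^sub>v y') $ i" .
    qed
    thus ?thesis using e(2) unfolding lam_def by simp
  qed
qed


end


lemma msk_eq:
  assumes A: "A \<in> carrier_mat n n"
    and f: "\<And>i j. i < n \<Longrightarrow> j < n \<Longrightarrow> F $$ (i,j) = (if K i j then A $$ (i,j) else 0)"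
    and d: "F \<in> carrier_mat n n"
  shows "F = msk K n A"
  using f d unfolding msk_def by (intro eq_matI) auto

theorem theorem4:
  fixes A :: "real mat" and n :: nat
  assumes "A \<in> carrier_mat n n"
    and "lower_hessenberg A"
    and "nonsingular_M_matrix A"
    and "S = stair1 A \<or> S = stair2 A"
  shows "rho (iter_mat (tril A) A) \<ge> rho (iter_mat S A)
       \<and> rho (iter_mat S A) \<ge> rho (iter_mat (triu A) A)"
proof -
  note A = assms(1)
  from assms(3) obtain n' s B where nB: "A \<in> carrier_mat n' n'" "B \<in> carrier_mat n' n'"
    "\<forall>i<n'. \<forall>j<n'. B $$ (i,j) \<ge> 0" "A = s \<cdot>\<^sub>m 1\<^sub>m n' - B" "rho B < s"
    unfolding nonsingular_M_matrix_def by blast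
  have "n' = n" using nB(1) A by auto
  hence B: "B \<in> carrier_mat n n" "\<And>i j. i < n \<Longrightarrow> j < n \<Longrightarrow> B $$ (i,j) \<ge> 0" "A = s \<cdot>\<^sub>m 1\<^sub>m n - B" "rho B < s"
    using nB by auto
  note cmp = compare[OF A B(1) B(2) B(3) B(4)]
  have hess: "\<And>i j. i < n \<Longrightarrow> j < n \<Longrightarrow> i + 1 < j \<Longrightarrow> A $$ (i,j) = 0"
    using assms(2) A unfolding lower_hessenberg_def by auto
  have GS: "tril A = msk (\<lambda>i j. j \<le> i) n A"
    by (rule msk_eq[OF A]) (use A in \<open>auto simp: tril_def\<close>)
  have AGS: "triu A = msk (\<lambda>i j. i \<le> j) n A"
    by (rule msk_eq[OF A]) (use A in \<open>auto simp: triu_def\<close>)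
  have S1: "stair1 A = msk (\<lambda>i j. i = j \<or> (odd i \<and> (j = i + 1 \<or> i = j + 1))) n A"
    by (rule msk_eq[OF A]) (use A in \<open>auto simp: stair1_def tridiag_def\<close>)
  have S2: "stair2 A = msk (\<lambda>i j. i = j \<or> (even i \<and> (j = i + 1 \<or> i = j + 1))) n A"
    by (rule msk_eq[OF A]) (use A in \<open>auto simp: stair2_def tridiag_def\<close>)
  show ?thesis
  proof (cases "S = stair1 A")
    case True
    have 1: "rho (iter_mat S A) \<le> rho (iter_mat (tril A) A)"
      unfolding True S1 GS
      by (rule cmp[where p = "\<lambda>i. i div 2"]) (use hess in \<open>auto split: if_splits\<close>)
    have 2: "rho (iter_mat (triu A) A) \<le> rho (iter_mat S A)"
      unfolding True S1 AGS
      by (rule cmp[where p = "\<lambda>i. (i + 1) div 2"]) (use hess in \<open>auto split: if_splits\<close>)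
    show ?thesis using 1 2 by simp
  next
    case False
    hence S: "S = stair2 A" using assms(4) by simp
    have 1: "rho (iter_mat S A) \<le> rho (iter_mat (tril A) A)"
      unfolding S S2 GS
      by (rule cmp[where p = "\<lambda>i. (i + 1) div 2"]) (use hess in \<open>auto split: if_splits\<close>)
    have 2: "rho (iter_mat (triu A) A) \<le> rho (iter_mat S A)"
      unfolding S S2 AGS
      by (rule cmp[where p = "\<lambda>i. i div 2"]) (use hess in \<open>auto split: if_splits\<close>)
    show ?thesis using 1 2 by simp
  qed
qed

end
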